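(* Every even weakly $\varphi^*$-practical number is practical.
   Context: $\varphi^*$ is the multiplicative function with $\varphi^*(p^k)=p^k-1$ for primes $p$ and $k\ge1$ (unitary totient). For multiplicative $f$, $S_f(n)=\sum_{d\mid n}f(d)$. Write $n=p_1^{e_1}\cdots p_k^{e_k}$ with distinct primes ordered so that $f(p_1)\le\cdots\le f(p_k)$, and let $m_i=\prod_{j=1}^{i}p_j^{e_j}$ for $0\le i<k$ ($m_0=1$); $n$ is weakly $f$-practical if $f(p_{i+1})\le S_f(m_i)+1$ for every $0\le i<k$. A positive integer $n$ is practical if every integer $m$ with $1\le m\le n$ is a sum of distinct positive divisors of $n$. *)

theory Defs
  imports "HOL-Computational_Algebra.Primes"
begin

definition unitary_totient :: "nat \<Rightarrow> nat" where
  "unitary_totient n = (\<Prod>p\<in>prime_factors n. p ^ multiplicity p n - 1)"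

definition divisor_sum :: "(nat \<Rightarrow> nat) \<Rightarrow> nat \<Rightarrow> nat" where
  "divisor_sum f n = (\<Sum>d\<in>{d. d dvd n}. f d)"

text \<open>Weakly f-practical: list the distinct primes p_1,...,p_k of n with f(p_1) <= ... <= f(p_k);
  m_i = prod_{j<=i} p_j^{e_j} (here with 0-based list indices, m for index i is the product over j < i);
  require f(p_{i+1}) <= S_f(m_i) + 1 for all i.\<close>
definition weakly_f_practical :: "(nat \<Rightarrow> nat) \<Rightarrow> nat \<Rightarrow> bool" where
  "weakly_f_practical f n \<longleftrightarrow> n \<ge> 1 \<and>
     (\<exists>ps. distinct ps \<and> set ps = prime_factors n \<and> sorted (map f ps) \<and>
        (\<forall>i<length ps. f (ps ! i) \<le>
            divisor_sum f (\<Prod>j<i. (ps ! j) ^ multiplicity (ps ! j) n) + 1))"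

definition practical :: "nat \<Rightarrow> bool" where
  "practical n \<longleftrightarrow> n > 0 \<and>
     (\<forall>m\<in>{1..n}. \<exists>D. D \<subseteq> {d. d dvd n \<and> d > 0} \<and> \<Sum>D = m)"

end

theory Submission
  imports Defs
begin

definition cmpl :: "nat set \<Rightarrow> bool" where
  "cmpl A \<longleftrightarrow> (\<forall>k \<le> \<Sum>A. \<exists>S\<subseteq>A. \<Sum>S = k)"

lemma cmpl_step:
  fixes A C :: "nat set" and q :: nat
  assumes fA: "finite A" and fC: "finite C" and cA: "cmpl A" and cC: "cmpl C"
    and q0: "0 < q" and qle: "q \<le> \<Sum>A + 1" and disj: "A \<inter> ((*) q ` C) = {}"
  shows "cmpl (A \<union> (*) q ` C)"
proof -
  have inj: "inj_on ((*) q) X" for X using q0 by (auto simp: inj_on_def)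
  have sqC: "\<Sum>((*) q ` T) = q * \<Sum>T" for T
    using inj[of T] by (simp add: sum.reindex sum_distrib_left)
  have tot: "\<Sum>(A \<union> (*) q ` C) = \<Sum>A + q * \<Sum>C"
    using fA fC disj by (simp add: sum.union_disjoint sqC)
  show ?thesis unfolding cmpl_def
  proof (intro allI impI)
    fix k assume k: "k \<le> \<Sum>(A \<union> (*) q ` C)"
    define s where "s = min (k div q) (\<Sum>C)"
    define t where "t = k - q * s"
    have qs: "q * s \<le> k"
    proof -
      have "q * s \<le> q * (k div q)" by (simp add: s_def)
      also have "\<dots> \<le> k" by simp
      finally show ?thesis .
    qed
    have tle: "t \<le> \<Sum>A"
    proof (cases "k div q \<le> \<Sum>C")
      case True
      then have "t = k mod q" by (simp add: s_def t_def minus_div_mult_eq_mod[symmetric] mult.commute)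
      also have "\<dots> < q" using q0 by simp
      finally show ?thesis using qle by simp
    next
      case False
      then have "s = \<Sum>C" by (simp add: s_def)
      then show ?thesis using k tot by (simp add: t_def)
    qed
    have sle: "s \<le> \<Sum>C" by (simp add: s_def)
    obtain S where S: "S \<subseteq> A" "\<Sum>S = t" using cA tle unfolding cmpl_def by blast
    obtain T where T: "T \<subseteq> C" "\<Sum>T = s" using cC sle unfolding cmpl_def by blast
    have fS: "finite S" using S fA finite_subset by blast
    have fT: "finite T" using T fC finite_subset by blast
    have dj: "S \<inter> (*) q ` T = {}" using S T disj by blast
    have "\<Sum>(S \<union> (*) q ` T) = t + q * s"
      using fS fT dj by (simp add: sum.union_disjoint sqC S T)
    also have "\<dots> = k" using qs by (simp add: t_def)
    finally show "\<exists>U\<subseteq>A \<union> (*) q ` C. \<Sum>U = k"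
      using S T by (intro exI[of _ "S \<union> (*) q ` T"]) auto
  qed
qed

lemma divisors_step:
  fixes m p j :: nat
  assumes p: "prime p" and nd: "\<not> p dvd m"
  shows "{d. d dvd m * p ^ Suc j} = {d. d dvd m} \<union> (*) p ` {d. d dvd m * p ^ j}"
proof (intro set_eqI iffI)
  fix d assume "d \<in> {d. d dvd m * p ^ Suc j}"
  then have d: "d dvd m * p ^ Suc j" by simp
  show "d \<in> {d. d dvd m} \<union> (*) p ` {d. d dvd m * p ^ j}"
  proof (cases "p dvd d")
    case True
    then obtain d' where d': "d = p * d'" by blast
    have "p * d' dvd p * (m * p ^ j)" using d d' by (simp add: ac_simps)
    then have "d' dvd m * p ^ j" using p by (simp add: prime_gt_0_nat)
    then show ?thesis using d' by auto
  next
    case False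
    then have "coprime d p" using p
      by (metis prime_imp_coprime coprime_commute)
    then have "coprime d (p ^ Suc j)" by simp
    then have "d dvd m" using d coprime_dvd_mult_left_iff by blast
    then show ?thesis by simp
  qed
next
  fix d assume "d \<in> {d. d dvd m} \<union> (*) p ` {d. d dvd m * p ^ j}"
  then show "d \<in> {d. d dvd m * p ^ Suc j}"
    by (auto simp: mult_dvd_mono dvd_mult2 ac_simps)
qed

lemma cmpl_pow:
  fixes m p :: nat
  assumes m0: "m > 0" and p: "prime p" and nd: "\<not> p dvd m"
    and c: "cmpl {d. d dvd m}" and ple: "p \<le> \<Sum>{d. d dvd m} + 1"
  shows "cmpl {d. d dvd m * p ^ j}"
proof (induction j)
  case 0 then show ?case using c by simp
next
  case (Suc j)
  have p0: "p > 0" using p prime_gt_0_nat by blast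
  have "cmpl ({d. d dvd m} \<union> (*) p ` {d. d dvd m * p ^ j})"
  proof (rule cmpl_step)
    show "finite {d. d dvd m}" using m0 by simp
    show "finite {d. d dvd m * p ^ j}" using m0 p0 by simp
    show "{d. d dvd m} \<inter> (*) p ` {d. d dvd m * p ^ j} = {}"
      using nd by (auto intro: dvd_trans)
  qed (use c Suc p0 ple in auto)
  then show ?case using divisors_step[OF p nd] by simp
qed

lemma ut_le: "d > 0 \<Longrightarrow> unitary_totient d \<le> d"
proof -
  assume d: "d > 0"
  have "unitary_totient d \<le> (\<Prod>p\<in>prime_factors d. p ^ multiplicity p d)"
    unfolding unitary_totient_def by (rule prod_mono) auto
  also have "\<dots> = d" using d by (simp add: prod_prime_factors)
  finally show ?thesis .
qed

lemma ut_prime: "prime p \<Longrightarrow> unitary_totient p = p - 1"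
  by (simp add: unitary_totient_def prime_prime_factors multiplicity_self)

lemma S_le:
  fixes m :: nat
  assumes m0: "m > 0" and two: "2 dvd m"
  shows "divisor_sum unitary_totient m + 1 \<le> \<Sum>{d. d dvd m}"
proof -
  let ?D = "{d. d dvd m}"
  have fD: "finite ?D" using m0 by simp
  have inD: "(2::nat) \<in> ?D" using two by simp
  have "divisor_sum unitary_totient m = unitary_totient 2 + (\<Sum>d\<in>?D - {2}. unitary_totient d)"
    unfolding divisor_sum_def using sum.remove[OF fD inD] by simp
  also have "\<dots> \<le> 1 + (\<Sum>d\<in>?D - {2}. d)"
  proof -
    have "unitary_totient 2 = 1" using ut_prime[of 2] by simp
    moreover have "(\<Sum>d\<in>?D - {2}. unitary_totient d) \<le> (\<Sum>d\<in>?D - {2}. d)"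
      by (rule sum_mono) (use m0 in \<open>auto intro!: ut_le dest: dvd_imp_le intro: Nat.gr0I\<close>)
    ultimately show ?thesis by simp
  qed
  finally have "divisor_sum unitary_totient m \<le> 1 + (\<Sum>d\<in>?D - {2}. d)" .
  moreover have "\<Sum>?D = 2 + (\<Sum>d\<in>?D - {2}. d)" using sum.remove[OF fD inD, of "\<lambda>x. x"] by simp
  ultimately show ?thesis by simp
qed

theorem lemma5p1:
  fixes n :: nat
  assumes "even n" and "weakly_f_practical unitary_totient n"
  shows "practical n"
proof -
  obtain ps where n1: "n \<ge> 1" and dps: "distinct ps" and sps: "set ps = prime_factors n"
    and srt: "sorted (map unitary_totient ps)"
    and cond: "\<And>i. i < length ps \<Longrightarrow> unitary_totient (ps ! i) \<le>
            divisor_sum unitary_totient (\<Prod>j<i. (ps ! j) ^ multiplicity (ps ! j) n) + 1"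
    using assms(2) unfolding weakly_f_practical_def by blast
  have n0: "n > 0" using n1 by simp
  define e where "e p = multiplicity p n" for p
  define M where "M i = (\<Prod>j<i. (ps ! j) ^ e (ps ! j))" for i
  have pr: "\<And>i. i < length ps \<Longrightarrow> prime (ps ! i)"
    using sps nth_mem by (metis in_prime_factors_imp_prime)
  have two_in: "(2::nat) \<in> set ps" using assms(1) n0 sps by (simp add: in_prime_factors_iff)
  then obtain j2 where j2: "j2 < length ps" "ps ! j2 = 2" by (metis in_set_conv_nth)
  have ps0: "ps ! 0 = 2"
  proof -
    have "unitary_totient (ps ! 0) \<le> unitary_totient (ps ! j2)"
      using sorted_nth_mono[OF srt, of 0 j2] j2 by (simp del: nth_map add: nth_map[of 0, symmetric]) (metis gr_zeroI less_nat_zero_code nth_map)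
    then have "ps ! 0 - 1 \<le> 1" using j2 ut_prime[OF pr[of 0]] ut_prime[of 2] by (cases ps) auto
    moreover have "prime (ps ! 0)" using pr[of 0] j2 by (cases ps) auto
    ultimately have "ps ! 0 \<le> 2" by simp
    moreover have "ps ! 0 \<ge> 2" using \<open>prime (ps ! 0)\<close> prime_ge_2_nat by blast
    ultimately show ?thesis by simp
  qed
  have len0: "length ps > 0" using j2 by (cases ps) auto
  have Mpos: "M i > 0" if "i \<le> length ps" for i
    unfolding M_def by (rule prod_pos) (use that pr in \<open>auto simp: prime_gt_0_nat\<close>)
  have key: "i \<le> length ps \<Longrightarrow> cmpl {d. d dvd M i}" for i
  proof (induction i)
    case 0
    have "{d::nat. d dvd 1} = {1}" by auto
    moreover have "cmpl {1::nat}" unfolding cmpl_def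
    proof (intro allI impI)
      fix k :: nat assume "k \<le> \<Sum>{1::nat}"
      then have "k = 0 \<or> k = 1" by auto
      then show "\<exists>S\<subseteq>{1}. \<Sum>S = k" (is ?thesis)
      proof
        assume "k = 0" then show ?thesis by (intro exI[of _ "{}"]) simp
      next
        assume "k = 1" then show ?thesis by (intro exI[of _ "{1}"]) simp
      qed
    qed
    ultimately show ?case by (simp add: M_def)
  next
    case (Suc i)
    then have il: "i < length ps" by simp
    let ?p = "ps ! i"
    have pp: "prime ?p" using pr il by simp
    have MS: "M (Suc i) = M i * ?p ^ e ?p" by (simp add: M_def)
    have nd: "\<not> ?p dvd M i"
    proof
      assume "?p dvd M i"
      then obtain j where j: "j < i" "?p dvd ps ! j ^ e (ps ! j)"
        unfolding M_def using pp by (auto simp: prime_dvd_prod_iff)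
      then have "?p dvd ps ! j" using pp prime_dvd_power by blast
      then have "?p = ps ! j" using pr j il by (simp add: primes_dvd_imp_eq)
      then show False using nth_eq_iff_index_eq[OF dps, of i j] j il by simp
    qed
    have ple: "?p \<le> \<Sum>{d. d dvd M i} + 1"
    proof (cases "i = 0")
      case True then show ?thesis using ps0 by (simp add: M_def)
    next
      case False
      have "ps ! 0 ^ e (ps ! 0) dvd M i" unfolding M_def using False
        by (intro dvd_prodI) auto
      then have "2 ^ e 2 dvd M i" using ps0 by simp
      moreover have "e 2 > 0" using two_in sps n0 unfolding e_def
        by (simp add: prime_multiplicity_gt_zero_iff in_prime_factors_iff)
      ultimately have "2 dvd M i" by (meson dvd_power dvd_trans)
      then have "divisor_sum unitary_totient (M i) + 1 \<le> \<Sum>{d. d dvd M i}"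
        using S_le Mpos[of i] il by simp
      moreover have "unitary_totient ?p \<le> divisor_sum unitary_totient (M i) + 1"
        using cond[OF il] by (simp add: M_def e_def)
      ultimately show ?thesis using ut_prime[OF pp] by simp
    qed
    show ?case using cmpl_pow[OF Mpos[OF less_imp_le[OF il]] pp nd Suc.IH[OF less_imp_le[OF il]] ple] MS by simp
  qed
  have Mn: "M (length ps) = n"
  proof -
    have "M (length ps) = (\<Prod>p\<in>(!) ps ` {..<length ps}. p ^ e p)"
      unfolding M_def by (subst prod.reindex) (auto intro: inj_on_nth dps)
    also have "(!) ps ` {..<length ps} = set ps" by (auto simp: in_set_conv_nth)
    also have "(\<Prod>p\<in>set ps. p ^ e p) = n" using sps n0 by (simp add: e_def prod_prime_factors)
    finally show ?thesis .
  qed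
  have cn: "cmpl {d. d dvd n}" using key[of "length ps"] Mn by simp
  have nle: "n \<le> \<Sum>{d. d dvd n}" using n0 by (intro member_le_sum) auto
  show ?thesis unfolding practical_def
  proof (intro conjI ballI)
    show "n > 0" by (rule n0)
    fix m assume "m \<in> {1..n}"
    then have "m \<le> \<Sum>{d. d dvd n}" using nle by simp
    then obtain D where "D \<subseteq> {d. d dvd n}" "\<Sum>D = m" using cn unfolding cmpl_def by blast
    moreover have "{d. d dvd n} \<subseteq> {d. d dvd n \<and> d > 0}" using n0 by (auto intro: Nat.gr0I)
    ultimately show "\<exists>D. D \<subseteq> {d. d dvd n \<and> d > 0} \<and> \<Sum>D = m" by blast
  qed
qed

end
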